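(* Let $\mathbb E$ be a stiffly Mal'tsev category. Then (1) every object of $\mathbb E$ carrying an internal Mal'tsev structure is a subobject of $1$ (i.e. $X\to 1$ is a monomorphism); (2) every object of $\mathbb E$ carrying an internal group structure is isomorphic to $1$.
   Context: A finitely complete category is Mal'tsev if every internal reflexive relation is an equivalence relation. A pointed finitely complete category is unital if for all $X,Y$ the morphisms $(1_X,0):X\to X\times Y$ and $(0,1_Y):Y\to X\times Y$ are jointly strongly epic. In a unital category two subobjects $u:U\to X$, $v:V\to X$ commute if there exists a (necessarily unique) $\varphi:U\times V\to X$ with $\varphi\circ(1_U,0)=u$ and $\varphi\circ(0,1_V)=v$; a unital category is stiffly unital if whenever $u,v$ commute, $u\cap v$ is the zero subobject. For an object $Y$, $Pt_Y\mathbb E$ is the pointed category of split epimorphisms $f:A\to Y$ with chosen section $s$ ($fs=1_Y$), morphisms commuting with $f$'s and $s$'s; for $\mathbb E$ Mal'tsev each $Pt_Y\mathbb E$ is unital. $\mathbb E$ is stiffly Mal'tsev if it is Mal'tsev and every fiber $Pt_Y\mathbb E$ is stiffly unital. An internal Mal'tsev structure on $X$ is $p:X^3\to X$ with $p(x,y,y)=x=p(y,y,x)$. *)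

theory Defs
  imports Main
begin

record ('o, 'a) cat =
  Ob   :: "'o set"
  Ar   :: "'a set"
  Dom  :: "'a \<Rightarrow> 'o"
  Cod  :: "'a \<Rightarrow> 'o"
  Idm  :: "'o \<Rightarrow> 'a"
  Comp :: "'a \<Rightarrow> 'a \<Rightarrow> 'a"   (* Comp C g f = g \<circ> f *)

definition hom :: "('o,'a) cat \<Rightarrow> 'o \<Rightarrow> 'o \<Rightarrow> 'a set" where
  "hom C X Y = {f \<in> Ar C. Dom C f = X \<and> Cod C f = Y}"

definition is_category :: "('o,'a) cat \<Rightarrow> bool" where
  "is_category C \<longleftrightarrow>
     (\<forall>f \<in> Ar C. Dom C f \<in> Ob C \<and> Cod C f \<in> Ob C) \<and>
     (\<forall>X \<in> Ob C. Idm C X \<in> hom C X X) \<and>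
     (\<forall>f g. f \<in> Ar C \<and> g \<in> Ar C \<and> Cod C f = Dom C g \<longrightarrow>
        Comp C g f \<in> hom C (Dom C f) (Cod C g)) \<and>
     (\<forall>f \<in> Ar C. Comp C (Idm C (Cod C f)) f = f \<and> Comp C f (Idm C (Dom C f)) = f) \<and>
     (\<forall>f g h. f \<in> Ar C \<and> g \<in> Ar C \<and> h \<in> Ar C \<and> Cod C f = Dom C g \<and> Cod C g = Dom C h \<longrightarrow>
        Comp C h (Comp C g f) = Comp C (Comp C h g) f)"

definition mono :: "('o,'a) cat \<Rightarrow> 'a \<Rightarrow> bool" where
  "mono C m \<longleftrightarrow> m \<in> Ar C \<and>
     (\<forall>g h. g \<in> Ar C \<and> h \<in> Ar C \<and> Cod C g = Dom C m \<and> Cod C h = Dom C m \<and>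
        Dom C g = Dom C h \<and> Comp C m g = Comp C m h \<longrightarrow> g = h)"

definition iso :: "('o,'a) cat \<Rightarrow> 'a \<Rightarrow> bool" where
  "iso C f \<longleftrightarrow> f \<in> Ar C \<and>
     (\<exists>g \<in> hom C (Cod C f) (Dom C f). Comp C g f = Idm C (Dom C f) \<and> Comp C f g = Idm C (Cod C f))"

definition isomorphic :: "('o,'a) cat \<Rightarrow> 'o \<Rightarrow> 'o \<Rightarrow> bool" where
  "isomorphic C X Y \<longleftrightarrow> (\<exists>f \<in> hom C X Y. iso C f)"

definition terminal :: "('o,'a) cat \<Rightarrow> 'o \<Rightarrow> bool" where
  "terminal C T \<longleftrightarrow> T \<in> Ob C \<and> (\<forall>X \<in> Ob C. \<exists>!f. f \<in> hom C X T)"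

definition initial :: "('o,'a) cat \<Rightarrow> 'o \<Rightarrow> bool" where
  "initial C I \<longleftrightarrow> I \<in> Ob C \<and> (\<forall>X \<in> Ob C. \<exists>!f. f \<in> hom C I X)"

definition zero_obj :: "('o,'a) cat \<Rightarrow> 'o \<Rightarrow> bool" where
  "zero_obj C Z \<longleftrightarrow> initial C Z \<and> terminal C Z"

definition pointed :: "('o,'a) cat \<Rightarrow> bool" where
  "pointed C \<longleftrightarrow> (\<exists>Z. zero_obj C Z)"

definition zero_mor :: "('o,'a) cat \<Rightarrow> 'o \<Rightarrow> 'o \<Rightarrow> 'a \<Rightarrow> bool" where
  "zero_mor C X Y f \<longleftrightarrow>
     (\<exists>Z a b. zero_obj C Z \<and> a \<in> hom C X Z \<and> b \<in> hom C Z Y \<and> f = Comp C b a)"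

definition is_product :: "('o,'a) cat \<Rightarrow> 'o \<Rightarrow> 'o \<Rightarrow> 'o \<Rightarrow> 'a \<Rightarrow> 'a \<Rightarrow> bool" where
  "is_product C X Y P p q \<longleftrightarrow> P \<in> Ob C \<and> p \<in> hom C P X \<and> q \<in> hom C P Y \<and>
     (\<forall>Z f g. f \<in> hom C Z X \<and> g \<in> hom C Z Y \<longrightarrow>
        (\<exists>!h. h \<in> hom C Z P \<and> Comp C p h = f \<and> Comp C q h = g))"

definition pair :: "('o,'a) cat \<Rightarrow> 'o \<Rightarrow> 'a \<Rightarrow> 'a \<Rightarrow> 'a \<Rightarrow> 'a \<Rightarrow> 'a" where
  "pair C P p q f g = (THE h. h \<in> hom C (Dom C f) P \<and> Comp C p h = f \<and> Comp C q h = g)"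

definition is_product3 :: "('o,'a) cat \<Rightarrow> 'o \<Rightarrow> 'o \<Rightarrow> 'a \<Rightarrow> 'a \<Rightarrow> 'a \<Rightarrow> bool" where
  "is_product3 C X P p1 p2 p3 \<longleftrightarrow> P \<in> Ob C \<and> p1 \<in> hom C P X \<and> p2 \<in> hom C P X \<and> p3 \<in> hom C P X \<and>
     (\<forall>Z f g h. f \<in> hom C Z X \<and> g \<in> hom C Z X \<and> h \<in> hom C Z X \<longrightarrow>
        (\<exists>!k. k \<in> hom C Z P \<and> Comp C p1 k = f \<and> Comp C p2 k = g \<and> Comp C p3 k = h))"

definition tuple3 :: "('o,'a) cat \<Rightarrow> 'o \<Rightarrow> 'a \<Rightarrow> 'a \<Rightarrow> 'a \<Rightarrow> 'a \<Rightarrow> 'a \<Rightarrow> 'a \<Rightarrow> 'a" where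
  "tuple3 C P p1 p2 p3 f g h =
     (THE k. k \<in> hom C (Dom C f) P \<and> Comp C p1 k = f \<and> Comp C p2 k = g \<and> Comp C p3 k = h)"

definition is_pullback :: "('o,'a) cat \<Rightarrow> 'a \<Rightarrow> 'a \<Rightarrow> 'o \<Rightarrow> 'a \<Rightarrow> 'a \<Rightarrow> bool" where
  "is_pullback C f g P p q \<longleftrightarrow> f \<in> Ar C \<and> g \<in> Ar C \<and> Cod C f = Cod C g \<and> P \<in> Ob C \<and>
     p \<in> hom C P (Dom C f) \<and> q \<in> hom C P (Dom C g) \<and> Comp C f p = Comp C g q \<and>
     (\<forall>W a b. a \<in> hom C W (Dom C f) \<and> b \<in> hom C W (Dom C g) \<and> Comp C f a = Comp C g b \<longrightarrow>
        (\<exists>!h. h \<in> hom C W P \<and> Comp C p h = a \<and> Comp C q h = b))"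

definition finitely_complete :: "('o,'a) cat \<Rightarrow> bool" where
  "finitely_complete C \<longleftrightarrow> is_category C \<and> (\<exists>T. terminal C T) \<and>
     (\<forall>f g. f \<in> Ar C \<and> g \<in> Ar C \<and> Cod C f = Cod C g \<longrightarrow> (\<exists>P p q. is_pullback C f g P p q))"

definition jointly_monic :: "('o,'a) cat \<Rightarrow> 'a \<Rightarrow> 'a \<Rightarrow> bool" where
  "jointly_monic C r1 r2 \<longleftrightarrow> r1 \<in> Ar C \<and> r2 \<in> Ar C \<and> Dom C r1 = Dom C r2 \<and>
     (\<forall>g h. g \<in> Ar C \<and> h \<in> Ar C \<and> Cod C g = Dom C r1 \<and> Cod C h = Dom C r1 \<and> Dom C g = Dom C h \<and>
        Comp C r1 g = Comp C r1 h \<and> Comp C r2 g = Comp C r2 h \<longrightarrow> g = h)"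

definition internal_relation :: "('o,'a) cat \<Rightarrow> 'o \<Rightarrow> 'o \<Rightarrow> 'a \<Rightarrow> 'a \<Rightarrow> bool" where
  "internal_relation C X R r1 r2 \<longleftrightarrow> r1 \<in> hom C R X \<and> r2 \<in> hom C R X \<and> jointly_monic C r1 r2"

definition rel_reflexive :: "('o,'a) cat \<Rightarrow> 'o \<Rightarrow> 'o \<Rightarrow> 'a \<Rightarrow> 'a \<Rightarrow> bool" where
  "rel_reflexive C X R r1 r2 \<longleftrightarrow>
     (\<exists>d \<in> hom C X R. Comp C r1 d = Idm C X \<and> Comp C r2 d = Idm C X)"

definition rel_symmetric :: "('o,'a) cat \<Rightarrow> 'o \<Rightarrow> 'o \<Rightarrow> 'a \<Rightarrow> 'a \<Rightarrow> bool" where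
  "rel_symmetric C X R r1 r2 \<longleftrightarrow>
     (\<exists>s \<in> hom C R R. Comp C r1 s = r2 \<and> Comp C r2 s = r1)"

definition rel_transitive :: "('o,'a) cat \<Rightarrow> 'o \<Rightarrow> 'o \<Rightarrow> 'a \<Rightarrow> 'a \<Rightarrow> bool" where
  "rel_transitive C X R r1 r2 \<longleftrightarrow>
     (\<forall>P p q. is_pullback C r2 r1 P p q \<longrightarrow>
        (\<exists>t \<in> hom C P R. Comp C r1 t = Comp C r1 p \<and> Comp C r2 t = Comp C r2 q))"

definition rel_equivalence :: "('o,'a) cat \<Rightarrow> 'o \<Rightarrow> 'o \<Rightarrow> 'a \<Rightarrow> 'a \<Rightarrow> bool" where
  "rel_equivalence C X R r1 r2 \<longleftrightarrow>
     rel_reflexive C X R r1 r2 \<and> rel_symmetric C X R r1 r2 \<and> rel_transitive C X R r1 r2"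

definition maltsev :: "('o,'a) cat \<Rightarrow> bool" where
  "maltsev C \<longleftrightarrow> finitely_complete C \<and>
     (\<forall>X R r1 r2. X \<in> Ob C \<and> internal_relation C X R r1 r2 \<and> rel_reflexive C X R r1 r2 \<longrightarrow>
        rel_equivalence C X R r1 r2)"

definition jointly_epic :: "('o,'a) cat \<Rightarrow> 'a \<Rightarrow> 'a \<Rightarrow> bool" where
  "jointly_epic C u v \<longleftrightarrow> u \<in> Ar C \<and> v \<in> Ar C \<and> Cod C u = Cod C v \<and>
     (\<forall>g h. g \<in> Ar C \<and> h \<in> Ar C \<and> Dom C g = Cod C u \<and> Dom C h = Cod C u \<and> Cod C g = Cod C h \<and>
        Comp C g u = Comp C h u \<and> Comp C g v = Comp C h v \<longrightarrow> g = h)"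

definition jointly_strongly_epic :: "('o,'a) cat \<Rightarrow> 'a \<Rightarrow> 'a \<Rightarrow> bool" where
  "jointly_strongly_epic C u v \<longleftrightarrow> jointly_epic C u v \<and>
     (\<forall>M Z m g a b. mono C m \<and> m \<in> hom C M Z \<and> g \<in> hom C (Cod C u) Z \<and>
        a \<in> hom C (Dom C u) M \<and> b \<in> hom C (Dom C v) M \<and>
        Comp C m a = Comp C g u \<and> Comp C m b = Comp C g v \<longrightarrow>
        (\<exists>!d. d \<in> hom C (Cod C u) M \<and> Comp C d u = a \<and> Comp C d v = b \<and> Comp C m d = g))"

definition is_inj1 :: "('o,'a) cat \<Rightarrow> 'o \<Rightarrow> 'o \<Rightarrow> 'o \<Rightarrow> 'a \<Rightarrow> 'a \<Rightarrow> 'a \<Rightarrow> bool" where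
  "is_inj1 C X Y P p q i \<longleftrightarrow> i \<in> hom C X P \<and> Comp C p i = Idm C X \<and> zero_mor C X Y (Comp C q i)"

definition is_inj2 :: "('o,'a) cat \<Rightarrow> 'o \<Rightarrow> 'o \<Rightarrow> 'o \<Rightarrow> 'a \<Rightarrow> 'a \<Rightarrow> 'a \<Rightarrow> bool" where
  "is_inj2 C X Y P p q i \<longleftrightarrow> i \<in> hom C Y P \<and> zero_mor C Y X (Comp C p i) \<and> Comp C q i = Idm C Y"

definition unital :: "('o,'a) cat \<Rightarrow> bool" where
  "unital C \<longleftrightarrow> finitely_complete C \<and> pointed C \<and>
     (\<forall>X Y P p q i1 i2. X \<in> Ob C \<and> Y \<in> Ob C \<and> is_product C X Y P p q \<and>
        is_inj1 C X Y P p q i1 \<and> is_inj2 C X Y P p q i2 \<longrightarrow> jointly_strongly_epic C i1 i2)"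

definition commute :: "('o,'a) cat \<Rightarrow> 'a \<Rightarrow> 'a \<Rightarrow> bool" where
  "commute C u v \<longleftrightarrow>
     (\<exists>P p q i1 i2 phi. is_product C (Dom C u) (Dom C v) P p q \<and>
        is_inj1 C (Dom C u) (Dom C v) P p q i1 \<and> is_inj2 C (Dom C u) (Dom C v) P p q i2 \<and>
        phi \<in> hom C P (Cod C u) \<and> Comp C phi i1 = u \<and> Comp C phi i2 = v)"

definition stiffly_unital :: "('o,'a) cat \<Rightarrow> bool" where
  "stiffly_unital C \<longleftrightarrow> unital C \<and>
     (\<forall>u v. mono C u \<and> mono C v \<and> Cod C u = Cod C v \<and> commute C u v \<longrightarrow>
        (\<forall>P p q. is_pullback C u v P p q \<longrightarrow> zero_obj C P))"

type_synonym ('o,'a) pt_obj = "'o \<times> 'a \<times> 'a"    (* (A, f, s) with f : A \<rightarrow> Y, f s = 1_Y *)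
type_synonym ('o,'a) pt_arr = "('o,'a) pt_obj \<times> ('o,'a) pt_obj \<times> 'a"

definition Pt :: "('o,'a) cat \<Rightarrow> 'o \<Rightarrow> (('o,'a) pt_obj, ('o,'a) pt_arr) cat" where
  "Pt C Y =
     \<lparr> Ob = {(A, f, s). f \<in> hom C A Y \<and> s \<in> hom C Y A \<and> Comp C f s = Idm C Y},
       Ar = {(a, b, h). a \<in> {(A, f, s). f \<in> hom C A Y \<and> s \<in> hom C Y A \<and> Comp C f s = Idm C Y} \<and>
                        b \<in> {(A, f, s). f \<in> hom C A Y \<and> s \<in> hom C Y A \<and> Comp C f s = Idm C Y} \<and>
                        h \<in> hom C (fst a) (fst b) \<and>
                        Comp C (fst (snd b)) h = fst (snd a) \<and>
                        Comp C h (snd (snd a)) = snd (snd b)},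
       Dom = (\<lambda>(a, b, h). a),
       Cod = (\<lambda>(a, b, h). b),
       Idm = (\<lambda>a. (a, a, Idm C (fst a))),
       Comp = (\<lambda>(b, c, g) (a, b', h). (a, c, Comp C g h)) \<rparr>"

definition stiffly_maltsev :: "('o,'a) cat \<Rightarrow> bool" where
  "stiffly_maltsev C \<longleftrightarrow> maltsev C \<and> (\<forall>Y \<in> Ob C. stiffly_unital (Pt C Y))"

definition has_internal_maltsev :: "('o,'a) cat \<Rightarrow> 'o \<Rightarrow> bool" where
  "has_internal_maltsev C X \<longleftrightarrow>
     (\<exists>P p1 p2 p3 m. is_product3 C X P p1 p2 p3 \<and> m \<in> hom C P X \<and>
        (\<forall>T x y. x \<in> hom C T X \<and> y \<in> hom C T X \<longrightarrow>
           Comp C m (tuple3 C P p1 p2 p3 x y y) = x \<and>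
           Comp C m (tuple3 C P p1 p2 p3 y y x) = x))"

definition has_internal_group :: "('o,'a) cat \<Rightarrow> 'o \<Rightarrow> bool" where
  "has_internal_group C X \<longleftrightarrow>
     (\<exists>P p q m one e i. is_product C X X P p q \<and> terminal C one \<and>
        m \<in> hom C P X \<and> e \<in> hom C one X \<and> i \<in> hom C X X \<and>
        (let mul = (\<lambda>x y. Comp C m (pair C P p q x y));
             unit = (\<lambda>T. Comp C e (THE t. t \<in> hom C T one)) in
         \<forall>T x y z. x \<in> hom C T X \<and> y \<in> hom C T X \<and> z \<in> hom C T X \<longrightarrow>
           mul (mul x y) z = mul x (mul y z) \<and>
           mul x (unit T) = x \<and> mul (unit T) x = x \<and>
           mul x (Comp C i x) = unit T \<and> mul (Comp C i x) x = unit T))"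

end

theory Submission
  imports Defs
begin


lemma hom_iff: "f \<in> hom C X Y \<longleftrightarrow> f \<in> Ar C \<and> Dom C f = X \<and> Cod C f = Y"
  by (simp add: hom_def)

lemma cat_comp:
  assumes "is_category C" "f \<in> hom C X Y" "g \<in> hom C Y Z"
  shows "Comp C g f \<in> hom C X Z"
  using assms unfolding is_category_def hom_def by force

lemma cat_id:
  assumes "is_category C" "X \<in> Ob C"
  shows "Idm C X \<in> hom C X X"
  using assms unfolding is_category_def by blast

lemma cat_ob:
  assumes "is_category C" "f \<in> hom C X Y"
  shows "X \<in> Ob C" "Y \<in> Ob C"
  using assms unfolding is_category_def hom_def by auto

lemma cat_idl:
  assumes "is_category C" "f \<in> hom C X Y"
  shows "Comp C (Idm C Y) f = f"
  using assms unfolding is_category_def hom_def by auto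

lemma cat_idr:
  assumes "is_category C" "f \<in> hom C X Y"
  shows "Comp C f (Idm C X) = f"
  using assms unfolding is_category_def hom_def by auto

lemma cat_assoc:
  assumes "is_category C" "f \<in> hom C X Y" "g \<in> hom C Y Z" "h \<in> hom C Z W"
  shows "Comp C h (Comp C g f) = Comp C (Comp C h g) f"
  using assms unfolding is_category_def hom_def by auto

lemma prod_pair:
  assumes "is_product C X Y P p q" "f \<in> hom C Z X" "g \<in> hom C Z Y"
  shows "pair C P p q f g \<in> hom C Z P" "Comp C p (pair C P p q f g) = f" "Comp C q (pair C P p q f g) = g"
proof -
  have e: "\<exists>!h. h \<in> hom C Z P \<and> Comp C p h = f \<and> Comp C q h = g"
    using assms unfolding is_product_def by blast
  have d: "Dom C f = Z" using assms(2) by (simp add: hom_def)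
  have "pair C P p q f g \<in> hom C Z P \<and> Comp C p (pair C P p q f g) = f \<and> Comp C q (pair C P p q f g) = g"
    unfolding pair_def d by (rule theI'[OF e])
  then show "pair C P p q f g \<in> hom C Z P" "Comp C p (pair C P p q f g) = f" "Comp C q (pair C P p q f g) = g"
    by auto
qed

lemma prod_uniq:
  assumes "is_category C" "is_product C X Y P p q" "h \<in> hom C Z P" "k \<in> hom C Z P"
    "Comp C p h = Comp C p k" "Comp C q h = Comp C q k"
  shows "h = k"
proof -
  have p: "p \<in> hom C P X" and q: "q \<in> hom C P Y" using assms(2) unfolding is_product_def by auto
  have "Comp C p h \<in> hom C Z X" "Comp C q h \<in> hom C Z Y"
    using cat_comp[OF assms(1) assms(3) p] cat_comp[OF assms(1) assms(3) q] .
  then have e: "\<exists>!h'. h' \<in> hom C Z P \<and> Comp C p h' = Comp C p h \<and> Comp C q h' = Comp C q h"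
    using assms(2) unfolding is_product_def by blast
  have "h \<in> hom C Z P \<and> Comp C p h = Comp C p h \<and> Comp C q h = Comp C q h"
    "k \<in> hom C Z P \<and> Comp C p k = Comp C p h \<and> Comp C q k = Comp C q h"
    using assms by auto
  then show ?thesis using e by (metis (no_types, lifting))
qed

lemma pair_eq:
  assumes "is_category C" "is_product C X Y P p q" "h \<in> hom C Z P"
    "Comp C p h = f" "Comp C q h = g"
  shows "pair C P p q f g = h"
proof -
  have p: "p \<in> hom C P X" and q: "q \<in> hom C P Y" using assms(2) unfolding is_product_def by auto
  have f: "f \<in> hom C Z X" "g \<in> hom C Z Y"
    using cat_comp[OF assms(1) assms(3) p] cat_comp[OF assms(1) assms(3) q] assms by auto
  show ?thesis
    by (rule prod_uniq[OF assms(1,2) prod_pair(1)[OF assms(2) f] assms(3)])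
       (use prod_pair[OF assms(2) f] assms in auto)
qed

lemma tup_props:
  assumes "is_product3 C X P p1 p2 p3" "f \<in> hom C Z X" "g \<in> hom C Z X" "h \<in> hom C Z X"
  shows "tuple3 C P p1 p2 p3 f g h \<in> hom C Z P" "Comp C p1 (tuple3 C P p1 p2 p3 f g h) = f"
    "Comp C p2 (tuple3 C P p1 p2 p3 f g h) = g" "Comp C p3 (tuple3 C P p1 p2 p3 f g h) = h"
proof -
  have e: "\<exists>!k. k \<in> hom C Z P \<and> Comp C p1 k = f \<and> Comp C p2 k = g \<and> Comp C p3 k = h"
    using assms unfolding is_product3_def by blast
  have d: "Dom C f = Z" using assms(2) by (simp add: hom_def)
  have "tuple3 C P p1 p2 p3 f g h \<in> hom C Z P \<and> Comp C p1 (tuple3 C P p1 p2 p3 f g h) = f \<and>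
    Comp C p2 (tuple3 C P p1 p2 p3 f g h) = g \<and> Comp C p3 (tuple3 C P p1 p2 p3 f g h) = h"
    unfolding tuple3_def d by (rule theI'[OF e])
  then show "tuple3 C P p1 p2 p3 f g h \<in> hom C Z P" "Comp C p1 (tuple3 C P p1 p2 p3 f g h) = f"
    "Comp C p2 (tuple3 C P p1 p2 p3 f g h) = g" "Comp C p3 (tuple3 C P p1 p2 p3 f g h) = h"
    by auto
qed

lemma tup_eq:
  assumes "is_category C" "is_product3 C X P p1 p2 p3" "k \<in> hom C Z P"
    "Comp C p1 k = f" "Comp C p2 k = g" "Comp C p3 k = h"
  shows "tuple3 C P p1 p2 p3 f g h = k"
proof -
  have p: "p1 \<in> hom C P X" "p2 \<in> hom C P X" "p3 \<in> hom C P X" using assms(2) unfolding is_product3_def by auto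
  have f: "f \<in> hom C Z X" "g \<in> hom C Z X" "h \<in> hom C Z X"
    using cat_comp[OF assms(1) assms(3) p(1)] cat_comp[OF assms(1) assms(3) p(2)]
      cat_comp[OF assms(1) assms(3) p(3)] assms by auto
  have e: "\<exists>!k. k \<in> hom C Z P \<and> Comp C p1 k = f \<and> Comp C p2 k = g \<and> Comp C p3 k = h"
    using assms(2) f unfolding is_product3_def by blast
  show ?thesis using e tup_props[OF assms(2) f] assms(3-6) by blast
qed


lemma terminal_uniq:
  assumes "is_category C" "terminal C T" "f \<in> hom C X T" "g \<in> hom C X T"
  shows "f = g"
proof -
  have "X \<in> Ob C" using cat_ob[OF assms(1,3)] by simp
  then show ?thesis using assms(2-4) unfolding terminal_def by blast
qed

lemma terminal_ex:
  assumes "terminal C T" "X \<in> Ob C"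
  obtains f where "f \<in> hom C X T"
  using assms unfolding terminal_def by blast

lemma Pt_simps:
  "Dom (Pt C Y) (a,b,h) = a" "Cod (Pt C Y) (a,b,h) = b" "Idm (Pt C Y) a = (a,a,Idm C (fst a))"
  "Comp (Pt C Y) (b,c,g) (a,b',h) = (a,c,Comp C g h)"
  by (simp_all add: Pt_def)

lemma Pt_Ob: "(A,f,s) \<in> Ob (Pt C Y) \<longleftrightarrow> f \<in> hom C A Y \<and> s \<in> hom C Y A \<and> Comp C f s = Idm C Y"
  by (simp add: Pt_def)

lemma Pt_Ar: "((A,f,s),(B,g,r),h) \<in> Ar (Pt C Y) \<longleftrightarrow> (A,f,s) \<in> Ob (Pt C Y) \<and> (B,g,r) \<in> Ob (Pt C Y) \<and>
   h \<in> hom C A B \<and> Comp C g h = f \<and> Comp C h s = r"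
  by (simp add: Pt_def)

lemma Pt_hom: "x \<in> hom (Pt C Y) a b \<longleftrightarrow> (\<exists>h. x = (a,b,h) \<and> (a,b,h) \<in> Ar (Pt C Y))"
  by (cases x) (auto simp: hom_def Pt_def)

lemma Pt_hom3: "((A,f,s),(B,g,r),h) \<in> hom (Pt C Y) (A,f,s) (B,g,r) \<longleftrightarrow> ((A,f,s),(B,g,r),h) \<in> Ar (Pt C Y)"
  by (simp add: hom_def Pt_def)

lemma Pt_id_Ar:
  assumes "is_category C" "a \<in> Ob (Pt C Y)"
  shows "Idm (Pt C Y) a \<in> hom (Pt C Y) a a"
proof -
  obtain A f s where a: "a = (A,f,s)" by (cases a)
  have f: "f \<in> hom C A Y" and s: "s \<in> hom C Y A" using assms a by (auto simp: Pt_Ob)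
  have A: "A \<in> Ob C" using cat_ob[OF assms(1) f] by simp
  show ?thesis using assms a cat_id[OF assms(1) A] cat_idr[OF assms(1) f] cat_idl[OF assms(1) s]
    by (simp add: Pt_simps Pt_hom3 Pt_Ar)
qed

lemma Pt_idl:
  assumes "is_category C" "x \<in> Ar (Pt C Y)" "Cod (Pt C Y) x = a"
  shows "Comp (Pt C Y) (Idm (Pt C Y) a) x = x"
proof -
  obtain a' b h where x: "x = (a',b,h)" by (cases x)
  obtain A f s where a: "a = (A,f,s)" by (cases a)
  obtain B g r where b: "a' = (B,g,r)" by (cases a')
  have "h \<in> hom C B A" using assms x a b by (auto simp: Pt_Ar Pt_simps)
  then show ?thesis using x a b assms cat_idl[OF assms(1)] by (auto simp: Pt_simps)
qed

lemma Pt_idr: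
  assumes "is_category C" "x \<in> Ar (Pt C Y)" "Dom (Pt C Y) x = a"
  shows "Comp (Pt C Y) x (Idm (Pt C Y) a) = x"
proof -
  obtain a' b h where x: "x = (a,b,h)" using assms by (cases x) (auto simp: Pt_simps)
  obtain A f s where a: "a = (A,f,s)" by (cases a)
  obtain B g r where b: "b = (B,g,r)" by (cases b)
  have "h \<in> hom C A B" using assms x a b by (auto simp: Pt_Ar Pt_simps)
  then show ?thesis using x a b assms cat_idr[OF assms(1)] by (auto simp: Pt_simps)
qed

lemma stiff_zero:
  assumes sm: "stiffly_maltsev C" and Y: "Y \<in> Ob C" and A: "A \<in> Ob (Pt C Y)"
    and prod: "is_product (Pt C Y) A A B pa pb"
    and i1: "is_inj1 (Pt C Y) A A B pa pb i1" and i2: "is_inj2 (Pt C Y) A A B pa pb i2"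
    and phi: "phi \<in> hom (Pt C Y) B A"
    and c1: "Comp (Pt C Y) phi i1 = Idm (Pt C Y) A" and c2: "Comp (Pt C Y) phi i2 = Idm (Pt C Y) A"
  shows "zero_obj (Pt C Y) A"
proof -
  have cat: "is_category C" using sm unfolding stiffly_maltsev_def maltsev_def finitely_complete_def
    by (elim conjE)
  have su: "stiffly_unital (Pt C Y)" using sm Y unfolding stiffly_maltsev_def by (elim conjE) (erule bspec)
  let ?u = "Idm (Pt C Y) A"
  have uh: "?u \<in> hom (Pt C Y) A A" by (rule Pt_id_Ar[OF cat A])
  then have uA: "?u \<in> Ar (Pt C Y)" and du: "Dom (Pt C Y) ?u = A" and cu: "Cod (Pt C Y) ?u = A"
    by (auto simp: hom_def)
  have mono: "mono (Pt C Y) ?u"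
    unfolding mono_def
  proof (intro conjI allI impI)
    fix g h assume gh: "g \<in> Ar (Pt C Y) \<and> h \<in> Ar (Pt C Y) \<and> Cod (Pt C Y) g = Dom (Pt C Y) ?u \<and>
      Cod (Pt C Y) h = Dom (Pt C Y) ?u \<and> Dom (Pt C Y) g = Dom (Pt C Y) h \<and> Comp (Pt C Y) ?u g = Comp (Pt C Y) ?u h"
    have g1: "g \<in> Ar (Pt C Y)" and g2: "Cod (Pt C Y) g = A" and h1: "h \<in> Ar (Pt C Y)" and h2: "Cod (Pt C Y) h = A"
      using gh du by (elim conjE; simp)+
    have "Comp (Pt C Y) ?u g = g" by (rule Pt_idl[OF cat g1 g2])
    moreover have "Comp (Pt C Y) ?u h = h" by (rule Pt_idl[OF cat h1 h2])
    moreover have "Comp (Pt C Y) ?u g = Comp (Pt C Y) ?u h" using gh by (elim conjE)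
    ultimately show "g = h" by metis
  qed (rule uA)
  have com: "commute (Pt C Y) ?u ?u"
    unfolding commute_def du cu
    apply (rule exI[of _ B], rule exI[of _ pa], rule exI[of _ pb], rule exI[of _ i1], rule exI[of _ i2], rule exI[of _ phi])
    using prod i1 i2 phi c1 c2 by (intro conjI)
  have pb: "is_pullback (Pt C Y) ?u ?u A ?u ?u"
    unfolding is_pullback_def du cu
  proof (intro conjI allI impI)
    fix W a b assume h: "a \<in> hom (Pt C Y) W A \<and> b \<in> hom (Pt C Y) W A \<and> Comp (Pt C Y) ?u a = Comp (Pt C Y) ?u b"
    have hA: "a \<in> hom (Pt C Y) W A" using h by blast
    have hB: "b \<in> hom (Pt C Y) W A" using h by blast
    have hC: "Comp (Pt C Y) ?u a = Comp (Pt C Y) ?u b" using h by blast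
    have a1: "a \<in> Ar (Pt C Y)" and a2: "Cod (Pt C Y) a = A" using hA unfolding hom_def by blast+
    have b1: "b \<in> Ar (Pt C Y)" and b2: "Cod (Pt C Y) b = A" using hB unfolding hom_def by blast+
    have ea: "Comp (Pt C Y) ?u a = a" by (rule Pt_idl[OF cat a1 a2])
    have eb: "Comp (Pt C Y) ?u b = b" by (rule Pt_idl[OF cat b1 b2])
    have ab: "a = b" using ea eb hC by metis
    show "\<exists>!h. h \<in> hom (Pt C Y) W A \<and> Comp (Pt C Y) ?u h = a \<and> Comp (Pt C Y) ?u h = b"
    proof (rule ex1I[where a=a])
      show "a \<in> hom (Pt C Y) W A \<and> Comp (Pt C Y) ?u a = a \<and> Comp (Pt C Y) ?u a = b"
        using hA ea ab by metis
      fix x assume x: "x \<in> hom (Pt C Y) W A \<and> Comp (Pt C Y) ?u x = a \<and> Comp (Pt C Y) ?u x = b"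
      have x1: "x \<in> Ar (Pt C Y)" and x2: "Cod (Pt C Y) x = A" using x unfolding hom_def by blast+
      have "Comp (Pt C Y) ?u x = x" by (rule Pt_idl[OF cat x1 x2])
      then show "x = a" using x by metis
    qed
  qed (rule A uA uh refl)+
  have all: "\<forall>u v. mono (Pt C Y) u \<and> mono (Pt C Y) v \<and> Cod (Pt C Y) u = Cod (Pt C Y) v \<and> commute (Pt C Y) u v \<longrightarrow>
        (\<forall>P p q. is_pullback (Pt C Y) u v P p q \<longrightarrow> zero_obj (Pt C Y) P)"
    using su unfolding stiffly_unital_def by (rule conjunct2)
  have pre: "mono (Pt C Y) ?u \<and> mono (Pt C Y) ?u \<and> Cod (Pt C Y) ?u = Cod (Pt C Y) ?u \<and> commute (Pt C Y) ?u ?u"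
    using mono com by simp
  show ?thesis by (rule all[rule_format, OF pre pb])
qed

lemma zero_endo:
  assumes "zero_obj (Pt C Y) (A,f,s)" "((A,f,s),(A,f,s),h) \<in> Ar (Pt C Y)" "is_category C"
  shows "h = Idm C A"
proof -
  have t: "terminal (Pt C Y) (A,f,s)" using assms(1) unfolding zero_obj_def by blast
  have o: "(A,f,s) \<in> Ob (Pt C Y)" using t unfolding terminal_def by blast
  have "Idm (Pt C Y) (A,f,s) \<in> hom (Pt C Y) (A,f,s) (A,f,s)" by (rule Pt_id_Ar[OF assms(3) o])
  moreover have "((A,f,s),(A,f,s),h) \<in> hom (Pt C Y) (A,f,s) (A,f,s)" using assms(2) by (simp add: Pt_hom3)
  ultimately have "((A,f,s),(A,f,s),h) = Idm (Pt C Y) (A,f,s)" using t o unfolding terminal_def by blast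
  then show ?thesis by (simp add: Pt_simps)
qed

lemma Pt_zero:
  assumes "is_category C" "Y \<in> Ob C"
  shows "zero_obj (Pt C Y) (Y, Idm C Y, Idm C Y)"
proof -
  let ?Z = "(Y, Idm C Y, Idm C Y)"
  have iy: "Idm C Y \<in> hom C Y Y" by (rule cat_id[OF assms])
  have o: "?Z \<in> Ob (Pt C Y)" unfolding Pt_Ob using iy cat_idl[OF assms(1) iy] by blast
  have ini: "initial (Pt C Y) ?Z"
    unfolding initial_def
  proof (intro conjI ballI)
    fix a assume a: "a \<in> Ob (Pt C Y)"
    obtain A f s where aa: "a = (A,f,s)" by (cases a)
    have a': "(A,f,s) \<in> Ob (Pt C Y)" using a aa by simp
    have f: "f \<in> hom C A Y" and s: "s \<in> hom C Y A" and fs: "Comp C f s = Idm C Y" using a' unfolding Pt_Ob by auto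
    have ex: "(?Z, (A,f,s), s) \<in> hom (Pt C Y) ?Z (A,f,s)"
      unfolding Pt_hom3 Pt_Ar using o a' s fs cat_idr[OF assms(1) s] by blast
    show "\<exists>!x. x \<in> hom (Pt C Y) ?Z a"
      unfolding aa
    proof (rule ex1I, rule ex)
      fix x assume "x \<in> hom (Pt C Y) ?Z (A,f,s)"
      then obtain h where x: "x = (?Z, (A,f,s), h)" and h: "(?Z, (A,f,s), h) \<in> Ar (Pt C Y)"
        unfolding Pt_hom by blast
      then have "h \<in> hom C Y A" "Comp C h (Idm C Y) = s" unfolding Pt_Ar by auto
      then have "h = s" using cat_idr[OF assms(1)] by metis
      then show "x = (?Z, (A,f,s), s)" using x by simp
    qed
  qed (rule o)
  have ter: "terminal (Pt C Y) ?Z"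
    unfolding terminal_def
  proof (intro conjI ballI)
    fix a assume a: "a \<in> Ob (Pt C Y)"
    obtain A f s where aa: "a = (A,f,s)" by (cases a)
    have a': "(A,f,s) \<in> Ob (Pt C Y)" using a aa by simp
    have f: "f \<in> hom C A Y" and s: "s \<in> hom C Y A" and fs: "Comp C f s = Idm C Y" using a' unfolding Pt_Ob by auto
    have ex: "((A,f,s), ?Z, f) \<in> hom (Pt C Y) (A,f,s) ?Z"
      unfolding Pt_hom3 Pt_Ar using o a' f fs cat_idl[OF assms(1) f] by blast
    show "\<exists>!x. x \<in> hom (Pt C Y) a ?Z"
      unfolding aa
    proof (rule ex1I, rule ex)
      fix x assume "x \<in> hom (Pt C Y) (A,f,s) ?Z"
      then obtain h where x: "x = ((A,f,s), ?Z, h)" and h: "((A,f,s), ?Z, h) \<in> Ar (Pt C Y)"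
        unfolding Pt_hom by blast
      then have "h \<in> hom C A Y" "Comp C (Idm C Y) h = f" unfolding Pt_Ar by auto
      then have "h = f" using cat_idl[OF assms(1)] by metis
      then show "x = ((A,f,s), ?Z, f)" using x by simp
    qed
  qed (rule o)
  show ?thesis using ini ter by (simp add: zero_obj_def)
qed



lemma maltsev_part:
  assumes sm: "stiffly_maltsev C" and T: "terminal C T" and X: "X \<in> Ob C" and M: "has_internal_maltsev C X"
    and t: "t \<in> hom C X T"
  shows "mono C t"
proof -
  have mal: "maltsev C" using sm unfolding stiffly_maltsev_def by (elim conjE)
  have fc: "finitely_complete C" using mal unfolding maltsev_def by (elim conjE)
  have cat: "is_category C" using fc unfolding finitely_complete_def by (elim conjE)
  obtain P3 p1 p2 p3 m where pr3: "is_product3 C X P3 p1 p2 p3" and m: "m \<in> hom C P3 X"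
    and mx: "\<forall>T x y. x \<in> hom C T X \<and> y \<in> hom C T X \<longrightarrow>
           Comp C m (tuple3 C P3 p1 p2 p3 x y y) = x \<and> Comp C m (tuple3 C P3 p1 p2 p3 y y x) = x"
    using M unfolding has_internal_maltsev_def by blast
  have p1: "p1 \<in> hom C P3 X" and p2: "p2 \<in> hom C P3 X" and p3: "p3 \<in> hom C P3 X"
    using pr3 unfolding is_product3_def by blast+
  have tA: "t \<in> Ar C" and dt: "Dom C t = X" using t unfolding hom_def by blast+
  have "\<forall>f g. f \<in> Ar C \<and> g \<in> Ar C \<and> Cod C f = Cod C g \<longrightarrow> (\<exists>P p q. is_pullback C f g P p q)"
    using fc unfolding finitely_complete_def by (elim conjE)
  then obtain P p q where pb: "is_pullback C t t P p q" using tA by blast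
  have pr: "is_product C X X P p q"
    unfolding is_product_def
  proof (intro conjI allI impI)
    show "P \<in> Ob C" using pb unfolding is_pullback_def by blast
    show "p \<in> hom C P X" using pb dt unfolding is_pullback_def by metis
    show "q \<in> hom C P X" using pb dt unfolding is_pullback_def by metis
    fix Z f g assume fg: "f \<in> hom C Z X \<and> g \<in> hom C Z X"
    have "Comp C t f = Comp C t g"
      using fg by (intro terminal_uniq[OF cat T]) (auto intro: cat_comp[OF cat _ t])
    then show "\<exists>!h. h \<in> hom C Z P \<and> Comp C p h = f \<and> Comp C q h = g"
      using pb fg dt unfolding is_pullback_def by metis
  qed
  have p: "p \<in> hom C P X" and q: "q \<in> hom C P X" using pr unfolding is_product_def by blast+
  have idX: "Idm C X \<in> hom C X X" by (rule cat_id[OF cat X])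
  have PO: "P \<in> Ob C" using pr unfolding is_product_def by blast
  have idP: "Idm C P \<in> hom C P P" by (rule cat_id[OF cat PO])
  define \<Delta> where "\<Delta> = pair C P p q (Idm C X) (Idm C X)"
  have D: "\<Delta> \<in> hom C X P" "Comp C p \<Delta> = Idm C X" "Comp C q \<Delta> = Idm C X"
    unfolding \<Delta>_def using prod_pair[OF pr idX idX] by blast+
  define d3 where "d3 = tuple3 C P3 p1 p2 p3 (Idm C X) (Idm C X) (Idm C X)"
  have d3: "d3 \<in> hom C X P3" "Comp C p1 d3 = Idm C X" "Comp C p2 d3 = Idm C X" "Comp C p3 d3 = Idm C X"
    unfolding d3_def using tup_props[OF pr3 idX idX idX] by blast+
  have oA: "(P, p, \<Delta>) \<in> Ob (Pt C X)" unfolding Pt_Ob using p D by blast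
  have oB: "(P3, p1, d3) \<in> Ob (Pt C X)" unfolding Pt_Ob using p1 d3 by blast
  define A where "A = (P, p, \<Delta>)"
  define B where "B = (P3, p1, d3)"
  define r1 where "r1 = pair C P p q p1 p2"
  define r2 where "r2 = pair C P p q p1 p3"
  have r1: "r1 \<in> hom C P3 P" "Comp C p r1 = p1" "Comp C q r1 = p2" unfolding r1_def using prod_pair[OF pr p1 p2] by blast+
  have r2: "r2 \<in> hom C P3 P" "Comp C p r2 = p1" "Comp C q r2 = p3" unfolding r2_def using prod_pair[OF pr p1 p3] by blast+
  have r1d: "Comp C r1 d3 = \<Delta>"
  proof (rule prod_uniq[OF cat pr cat_comp[OF cat d3(1) r1(1)] D(1)])
    show "Comp C p (Comp C r1 d3) = Comp C p \<Delta>" using cat_assoc[OF cat d3(1) r1(1) p] r1(2) d3(2) D(2) by simp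
    show "Comp C q (Comp C r1 d3) = Comp C q \<Delta>" using cat_assoc[OF cat d3(1) r1(1) q] r1(3) d3(3) D(3) by simp
  qed
  have r2d: "Comp C r2 d3 = \<Delta>"
  proof (rule prod_uniq[OF cat pr cat_comp[OF cat d3(1) r2(1)] D(1)])
    show "Comp C p (Comp C r2 d3) = Comp C p \<Delta>" using cat_assoc[OF cat d3(1) r2(1) p] r2(2) d3(2) D(2) by simp
    show "Comp C q (Comp C r2 d3) = Comp C q \<Delta>" using cat_assoc[OF cat d3(1) r2(1) q] r2(3) d3(4) D(3) by simp
  qed
  have paA: "(B, A, r1) \<in> Ar (Pt C X)" unfolding A_def B_def Pt_Ar using oA oB r1(1,2) r1d by blast
  have pbA: "(B, A, r2) \<in> Ar (Pt C X)" unfolding A_def B_def Pt_Ar using oA oB r2(1,2) r2d by blast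
  have prodPt: "is_product (Pt C X) A A B (B, A, r1) (B, A, r2)"
    unfolding is_product_def
  proof (intro conjI allI impI)
    show "B \<in> Ob (Pt C X)" unfolding B_def by (rule oB)
    show "(B, A, r1) \<in> hom (Pt C X) B A" using paA unfolding Pt_hom by blast
    show "(B, A, r2) \<in> hom (Pt C X) B A" using pbA unfolding Pt_hom by blast
    fix Z f g assume fg: "f \<in> hom (Pt C X) Z A \<and> g \<in> hom (Pt C X) Z A"
    obtain \<alpha> where f: "f = (Z, A, \<alpha>)" and fA: "(Z, A, \<alpha>) \<in> Ar (Pt C X)" using fg unfolding Pt_hom by blast
    obtain \<beta> where g: "g = (Z, A, \<beta>)" and gA: "(Z, A, \<beta>) \<in> Ar (Pt C X)" using fg unfolding Pt_hom by blast
    obtain Z0 fz sz where Z: "Z = (Z0, fz, sz)" by (cases Z)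
    have oZ: "(Z0, fz, sz) \<in> Ob (Pt C X)" and al: "\<alpha> \<in> hom C Z0 P" "Comp C p \<alpha> = fz" "Comp C \<alpha> sz = \<Delta>"
      using fA unfolding Z A_def Pt_Ar by blast+
    have be: "\<beta> \<in> hom C Z0 P" "Comp C p \<beta> = fz" "Comp C \<beta> sz = \<Delta>"
      using gA unfolding Z A_def Pt_Ar by blast+
    have sz: "sz \<in> hom C X Z0" and fz: "fz \<in> hom C Z0 X" and fzs: "Comp C fz sz = Idm C X"
      using oZ unfolding Pt_Ob by blast+
    have qa: "Comp C q \<alpha> \<in> hom C Z0 X" by (rule cat_comp[OF cat al(1) q])
    have qb: "Comp C q \<beta> \<in> hom C Z0 X" by (rule cat_comp[OF cat be(1) q])
    define k where "k = tuple3 C P3 p1 p2 p3 fz (Comp C q \<alpha>) (Comp C q \<beta>)"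
    have k: "k \<in> hom C Z0 P3" "Comp C p1 k = fz" "Comp C p2 k = Comp C q \<alpha>" "Comp C p3 k = Comp C q \<beta>"
      unfolding k_def using tup_props[OF pr3 fz qa qb] by blast+
    have kA: "(Z, B, k) \<in> Ar (Pt C X)"
    proof -
      have 2: "d3 = Comp C k sz"
        unfolding d3_def
      proof (rule tup_eq[OF cat pr3 cat_comp[OF cat sz k(1)]])
        show "Comp C p1 (Comp C k sz) = Idm C X" using cat_assoc[OF cat sz k(1) p1] k(2) fzs by simp
        show "Comp C p2 (Comp C k sz) = Idm C X"
          using cat_assoc[OF cat sz k(1) p2] k(3) cat_assoc[OF cat sz al(1) q] al(3) D(3) by simp
        show "Comp C p3 (Comp C k sz) = Idm C X"
          using cat_assoc[OF cat sz k(1) p3] k(4) cat_assoc[OF cat sz be(1) q] be(3) D(3) by simp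
      qed
      show ?thesis unfolding Z B_def Pt_Ar using oZ oB k(1,2) 2 by simp
    qed
    have rk1: "Comp C r1 k = \<alpha>"
    proof (rule prod_uniq[OF cat pr cat_comp[OF cat k(1) r1(1)] al(1)])
      show "Comp C p (Comp C r1 k) = Comp C p \<alpha>" using cat_assoc[OF cat k(1) r1(1) p] r1(2) k(2) al(2) by simp
      show "Comp C q (Comp C r1 k) = Comp C q \<alpha>" using cat_assoc[OF cat k(1) r1(1) q] r1(3) k(3) by simp
    qed
    have rk2: "Comp C r2 k = \<beta>"
    proof (rule prod_uniq[OF cat pr cat_comp[OF cat k(1) r2(1)] be(1)])
      show "Comp C p (Comp C r2 k) = Comp C p \<beta>" using cat_assoc[OF cat k(1) r2(1) p] r2(2) k(2) be(2) by simp
      show "Comp C q (Comp C r2 k) = Comp C q \<beta>" using cat_assoc[OF cat k(1) r2(1) q] r2(3) k(4) by simp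
    qed
    show "\<exists>!h. h \<in> hom (Pt C X) Z B \<and> Comp (Pt C X) (B, A, r1) h = f \<and> Comp (Pt C X) (B, A, r2) h = g"
    proof (rule ex1I[where a="(Z, B, k)"])
      show "(Z, B, k) \<in> hom (Pt C X) Z B \<and> Comp (Pt C X) (B, A, r1) (Z, B, k) = f \<and> Comp (Pt C X) (B, A, r2) (Z, B, k) = g"
      proof (intro conjI)
        show "(Z, B, k) \<in> hom (Pt C X) Z B" using kA unfolding Pt_hom by blast
        show "Comp (Pt C X) (B, A, r1) (Z, B, k) = f" unfolding Pt_simps(4) rk1 f ..
        show "Comp (Pt C X) (B, A, r2) (Z, B, k) = g" unfolding Pt_simps(4) rk2 g ..
      qed
      fix h assume h: "h \<in> hom (Pt C X) Z B \<and> Comp (Pt C X) (B, A, r1) h = f \<and> Comp (Pt C X) (B, A, r2) h = g"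
      obtain k' where h': "h = (Z, B, k')" and hA: "(Z, B, k') \<in> Ar (Pt C X)" using h unfolding Pt_hom by blast
      have k': "k' \<in> hom C Z0 P3" using hA unfolding Z B_def Pt_Ar by blast
      have "(Z, A, Comp C r1 k') = (Z, A, \<alpha>)" using h unfolding h' f Pt_simps(4) by blast
      then have e1: "Comp C r1 k' = \<alpha>" by blast
      have "(Z, A, Comp C r2 k') = (Z, A, \<beta>)" using h unfolding h' g Pt_simps(4) by blast
      then have e2: "Comp C r2 k' = \<beta>" by blast
      have "tuple3 C P3 p1 p2 p3 fz (Comp C q \<alpha>) (Comp C q \<beta>) = k'"
      proof (rule tup_eq[OF cat pr3 k'])
        show "Comp C p1 k' = fz" using cat_assoc[OF cat k' r1(1) p] r1(2) e1 al(2) by simp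
        show "Comp C p2 k' = Comp C q \<alpha>" using cat_assoc[OF cat k' r1(1) q] r1(3) e1 by simp
        show "Comp C p3 k' = Comp C q \<beta>" using cat_assoc[OF cat k' r2(1) q] r2(3) e2 by simp
      qed
      then have "k' = k" unfolding k_def by (rule sym)
      then show "h = (Z, B, k)" using h' by simp
    qed
  qed
  have Z0: "zero_obj (Pt C X) (X, Idm C X, Idm C X)" by (rule Pt_zero[OF cat X])
  have oZ: "(X, Idm C X, Idm C X) \<in> Ob (Pt C X)" using Z0 unfolding zero_obj_def terminal_def by blast
  have aA: "(A, (X, Idm C X, Idm C X), p) \<in> Ar (Pt C X)"
    unfolding A_def Pt_Ar using oA oZ p cat_idl[OF cat p] D(2) by blast
  have bA: "((X, Idm C X, Idm C X), A, \<Delta>) \<in> Ar (Pt C X)"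
    unfolding A_def Pt_Ar using oA oZ D cat_idr[OF cat D(1)] by blast
  have zE: "zero_mor (Pt C X) A A (A, A, Comp C \<Delta> p)"
    unfolding zero_mor_def
  proof (intro exI conjI)
    show "zero_obj (Pt C X) (X, Idm C X, Idm C X)" by (rule Z0)
    show "(A, (X, Idm C X, Idm C X), p) \<in> hom (Pt C X) A (X, Idm C X, Idm C X)"
      using aA unfolding Pt_hom by blast
    show "((X, Idm C X, Idm C X), A, \<Delta>) \<in> hom (Pt C X) (X, Idm C X, Idm C X) A"
      using bA unfolding Pt_hom by blast
    show "(A, A, Comp C \<Delta> p) = Comp (Pt C X) ((X, Idm C X, Idm C X), A, \<Delta>) (A, (X, Idm C X, Idm C X), p)"
      unfolding Pt_simps(4) ..
  qed
  have Dp: "Comp C \<Delta> p \<in> hom C P P" by (rule cat_comp[OF cat p D(1)])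
  have pDp: "Comp C p (Comp C \<Delta> p) = p" using cat_assoc[OF cat p D(1) p] D(2) cat_idl[OF cat p] by simp
  have qDp: "Comp C q (Comp C \<Delta> p) = p" using cat_assoc[OF cat p D(1) q] D(3) cat_idl[OF cat p] by simp
  have idPA: "Idm (Pt C X) A = (A, A, Idm C P)" unfolding A_def Pt_simps(3) by simp
  define j1 where "j1 = tuple3 C P3 p1 p2 p3 p q p"
  define j2 where "j2 = tuple3 C P3 p1 p2 p3 p p q"
  have j1: "j1 \<in> hom C P P3" "Comp C p1 j1 = p" "Comp C p2 j1 = q" "Comp C p3 j1 = p"
    unfolding j1_def using tup_props[OF pr3 p q p] by blast+
  have j2: "j2 \<in> hom C P P3" "Comp C p1 j2 = p" "Comp C p2 j2 = p" "Comp C p3 j2 = q"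
    unfolding j2_def using tup_props[OF pr3 p p q] by blast+
  have j1A: "(A, B, j1) \<in> Ar (Pt C X)"
  proof -
    have 2: "d3 = Comp C j1 \<Delta>"
      unfolding d3_def
    proof (rule tup_eq[OF cat pr3 cat_comp[OF cat D(1) j1(1)]])
      show "Comp C p1 (Comp C j1 \<Delta>) = Idm C X" using cat_assoc[OF cat D(1) j1(1) p1] j1(2) D(2) by simp
      show "Comp C p2 (Comp C j1 \<Delta>) = Idm C X" using cat_assoc[OF cat D(1) j1(1) p2] j1(3) D(3) by simp
      show "Comp C p3 (Comp C j1 \<Delta>) = Idm C X" using cat_assoc[OF cat D(1) j1(1) p3] j1(4) D(2) by simp
    qed
    show ?thesis unfolding A_def B_def Pt_Ar using oA oB j1(1,2) 2 by simp
  qed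
  have j2A: "(A, B, j2) \<in> Ar (Pt C X)"
  proof -
    have 2: "d3 = Comp C j2 \<Delta>"
      unfolding d3_def
    proof (rule tup_eq[OF cat pr3 cat_comp[OF cat D(1) j2(1)]])
      show "Comp C p1 (Comp C j2 \<Delta>) = Idm C X" using cat_assoc[OF cat D(1) j2(1) p1] j2(2) D(2) by simp
      show "Comp C p2 (Comp C j2 \<Delta>) = Idm C X" using cat_assoc[OF cat D(1) j2(1) p2] j2(3) D(2) by simp
      show "Comp C p3 (Comp C j2 \<Delta>) = Idm C X" using cat_assoc[OF cat D(1) j2(1) p3] j2(4) D(3) by simp
    qed
    show ?thesis unfolding A_def B_def Pt_Ar using oA oB j2(1,2) 2 by simp
  qed
  have r1j1: "Comp C r1 j1 = Idm C P"
  proof (rule prod_uniq[OF cat pr cat_comp[OF cat j1(1) r1(1)] idP])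
    show "Comp C p (Comp C r1 j1) = Comp C p (Idm C P)" using cat_assoc[OF cat j1(1) r1(1) p] r1(2) j1(2) cat_idr[OF cat p] by simp
    show "Comp C q (Comp C r1 j1) = Comp C q (Idm C P)" using cat_assoc[OF cat j1(1) r1(1) q] r1(3) j1(3) cat_idr[OF cat q] by simp
  qed
  have r2j1: "Comp C r2 j1 = Comp C \<Delta> p"
  proof (rule prod_uniq[OF cat pr cat_comp[OF cat j1(1) r2(1)] Dp])
    show "Comp C p (Comp C r2 j1) = Comp C p (Comp C \<Delta> p)" using cat_assoc[OF cat j1(1) r2(1) p] r2(2) j1(2) pDp by simp
    show "Comp C q (Comp C r2 j1) = Comp C q (Comp C \<Delta> p)" using cat_assoc[OF cat j1(1) r2(1) q] r2(3) j1(4) qDp by simp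
  qed
  have r1j2: "Comp C r1 j2 = Comp C \<Delta> p"
  proof (rule prod_uniq[OF cat pr cat_comp[OF cat j2(1) r1(1)] Dp])
    show "Comp C p (Comp C r1 j2) = Comp C p (Comp C \<Delta> p)" using cat_assoc[OF cat j2(1) r1(1) p] r1(2) j2(2) pDp by simp
    show "Comp C q (Comp C r1 j2) = Comp C q (Comp C \<Delta> p)" using cat_assoc[OF cat j2(1) r1(1) q] r1(3) j2(3) qDp by simp
  qed
  have r2j2: "Comp C r2 j2 = Idm C P"
  proof (rule prod_uniq[OF cat pr cat_comp[OF cat j2(1) r2(1)] idP])
    show "Comp C p (Comp C r2 j2) = Comp C p (Idm C P)" using cat_assoc[OF cat j2(1) r2(1) p] r2(2) j2(2) cat_idr[OF cat p] by simp
    show "Comp C q (Comp C r2 j2) = Comp C q (Idm C P)" using cat_assoc[OF cat j2(1) r2(1) q] r2(3) j2(4) cat_idr[OF cat q] by simp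
  qed
  have inj1: "is_inj1 (Pt C X) A A B (B, A, r1) (B, A, r2) (A, B, j1)"
    unfolding is_inj1_def
  proof (intro conjI)
    show "(A, B, j1) \<in> hom (Pt C X) A B" using j1A unfolding Pt_hom by blast
    show "Comp (Pt C X) (B, A, r1) (A, B, j1) = Idm (Pt C X) A" unfolding Pt_simps(4) r1j1 idPA ..
    show "zero_mor (Pt C X) A A (Comp (Pt C X) (B, A, r2) (A, B, j1))" unfolding Pt_simps(4) r2j1 by (rule zE)
  qed
  have inj2: "is_inj2 (Pt C X) A A B (B, A, r1) (B, A, r2) (A, B, j2)"
    unfolding is_inj2_def
  proof (intro conjI)
    show "(A, B, j2) \<in> hom (Pt C X) A B" using j2A unfolding Pt_hom by blast
    show "Comp (Pt C X) (B, A, r2) (A, B, j2) = Idm (Pt C X) A" unfolding Pt_simps(4) r2j2 idPA ..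
    show "zero_mor (Pt C X) A A (Comp (Pt C X) (B, A, r1) (A, B, j2))" unfolding Pt_simps(4) r1j2 by (rule zE)
  qed
  define \<tau> where "\<tau> = tuple3 C P3 p1 p2 p3 p2 p1 p3"
  have tau: "\<tau> \<in> hom C P3 P3" "Comp C p1 \<tau> = p2" "Comp C p2 \<tau> = p1" "Comp C p3 \<tau> = p3"
    unfolding \<tau>_def using tup_props[OF pr3 p2 p1 p3] by blast+
  have mt: "Comp C m \<tau> \<in> hom C P3 X" by (rule cat_comp[OF cat tau(1) m])
  define \<phi> where "\<phi> = pair C P p q p1 (Comp C m \<tau>)"
  have ph: "\<phi> \<in> hom C P3 P" "Comp C p \<phi> = p1" "Comp C q \<phi> = Comp C m \<tau>"
    unfolding \<phi>_def using prod_pair[OF pr p1 mt] by blast+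
  have td3: "Comp C \<tau> d3 = d3"
  proof -
    have "tuple3 C P3 p1 p2 p3 (Idm C X) (Idm C X) (Idm C X) = Comp C \<tau> d3"
    proof (rule tup_eq[OF cat pr3 cat_comp[OF cat d3(1) tau(1)]])
      show "Comp C p1 (Comp C \<tau> d3) = Idm C X" using cat_assoc[OF cat d3(1) tau(1) p1] tau(2) d3(3) by simp
      show "Comp C p2 (Comp C \<tau> d3) = Idm C X" using cat_assoc[OF cat d3(1) tau(1) p2] tau(3) d3(2) by simp
      show "Comp C p3 (Comp C \<tau> d3) = Idm C X" using cat_assoc[OF cat d3(1) tau(1) p3] tau(4) d3(4) by simp
    qed
    then show ?thesis unfolding d3_def by (rule sym)
  qed
  have md3: "Comp C m d3 = Idm C X" unfolding d3_def using mx idX by blast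
  have phd: "Comp C \<phi> d3 = \<Delta>"
  proof (rule prod_uniq[OF cat pr cat_comp[OF cat d3(1) ph(1)] D(1)])
    show "Comp C p (Comp C \<phi> d3) = Comp C p \<Delta>" using cat_assoc[OF cat d3(1) ph(1) p] ph(2) d3(2) D(2) by simp
    show "Comp C q (Comp C \<phi> d3) = Comp C q \<Delta>"
      using cat_assoc[OF cat d3(1) ph(1) q] ph(3) cat_assoc[OF cat d3(1) tau(1) m] td3 md3 D(3) by simp
  qed
  have phA: "(B, A, \<phi>) \<in> Ar (Pt C X)" unfolding A_def B_def Pt_Ar using oA oB ph(1,2) phd by blast
  have phi: "(B, A, \<phi>) \<in> hom (Pt C X) B A" using phA unfolding Pt_hom by blast
  have tj1: "Comp C \<tau> j1 = tuple3 C P3 p1 p2 p3 q p p"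
  proof (rule sym, rule tup_eq[OF cat pr3 cat_comp[OF cat j1(1) tau(1)]])
    show "Comp C p1 (Comp C \<tau> j1) = q" using cat_assoc[OF cat j1(1) tau(1) p1] tau(2) j1(3) by simp
    show "Comp C p2 (Comp C \<tau> j1) = p" using cat_assoc[OF cat j1(1) tau(1) p2] tau(3) j1(2) by simp
    show "Comp C p3 (Comp C \<tau> j1) = p" using cat_assoc[OF cat j1(1) tau(1) p3] tau(4) j1(4) by simp
  qed
  have tj2: "Comp C \<tau> j2 = tuple3 C P3 p1 p2 p3 p p q"
  proof (rule sym, rule tup_eq[OF cat pr3 cat_comp[OF cat j2(1) tau(1)]])
    show "Comp C p1 (Comp C \<tau> j2) = p" using cat_assoc[OF cat j2(1) tau(1) p1] tau(2) j2(3) by simp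
    show "Comp C p2 (Comp C \<tau> j2) = p" using cat_assoc[OF cat j2(1) tau(1) p2] tau(3) j2(2) by simp
    show "Comp C p3 (Comp C \<tau> j2) = q" using cat_assoc[OF cat j2(1) tau(1) p3] tau(4) j2(4) by simp
  qed
  have mqpp: "Comp C m (tuple3 C P3 p1 p2 p3 q p p) = q" using mx p q by blast
  have mppq: "Comp C m (tuple3 C P3 p1 p2 p3 p p q) = q" using mx p q by blast
  have phj1: "Comp C \<phi> j1 = Idm C P"
  proof (rule prod_uniq[OF cat pr cat_comp[OF cat j1(1) ph(1)] idP])
    show "Comp C p (Comp C \<phi> j1) = Comp C p (Idm C P)" using cat_assoc[OF cat j1(1) ph(1) p] ph(2) j1(2) cat_idr[OF cat p] by simp
    show "Comp C q (Comp C \<phi> j1) = Comp C q (Idm C P)"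
      using cat_assoc[OF cat j1(1) ph(1) q] ph(3) cat_assoc[OF cat j1(1) tau(1) m] tj1 mqpp cat_idr[OF cat q] by simp
  qed
  have phj2: "Comp C \<phi> j2 = Idm C P"
  proof (rule prod_uniq[OF cat pr cat_comp[OF cat j2(1) ph(1)] idP])
    show "Comp C p (Comp C \<phi> j2) = Comp C p (Idm C P)" using cat_assoc[OF cat j2(1) ph(1) p] ph(2) j2(2) cat_idr[OF cat p] by simp
    show "Comp C q (Comp C \<phi> j2) = Comp C q (Idm C P)"
      using cat_assoc[OF cat j2(1) ph(1) q] ph(3) cat_assoc[OF cat j2(1) tau(1) m] tj2 mppq cat_idr[OF cat q] by simp
  qed
  have c1: "Comp (Pt C X) (B, A, \<phi>) (A, B, j1) = Idm (Pt C X) A" unfolding Pt_simps(4) idPA phj1 ..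
  have c2: "Comp (Pt C X) (B, A, \<phi>) (A, B, j2) = Idm (Pt C X) A" unfolding Pt_simps(4) idPA phj2 ..
  have oA': "A \<in> Ob (Pt C X)" unfolding A_def by (rule oA)
  have zA: "zero_obj (Pt C X) A" by (rule stiff_zero[OF sm X oA' prodPt inj1 inj2 phi c1 c2])
  have DpA: "((P, p, \<Delta>), (P, p, \<Delta>), Comp C \<Delta> p) \<in> Ar (Pt C X)"
  proof -
    have "Comp C (Comp C \<Delta> p) \<Delta> = \<Delta>" using cat_assoc[OF cat D(1) p D(1)] D(2) cat_idr[OF cat D(1)] by simp
    then show ?thesis unfolding Pt_Ar using oA Dp pDp by blast
  qed
  have DI: "Comp C \<Delta> p = Idm C P" by (rule zero_endo[OF zA[unfolded A_def] DpA cat])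
  show ?thesis
    unfolding mono_def
  proof (intro conjI allI impI)
    show "t \<in> Ar C" by (rule tA)
    fix g h assume gh: "g \<in> Ar C \<and> h \<in> Ar C \<and> Cod C g = Dom C t \<and> Cod C h = Dom C t \<and> Dom C g = Dom C h \<and> Comp C t g = Comp C t h"
    have g: "g \<in> hom C (Dom C g) X" and h: "h \<in> hom C (Dom C g) X" using gh dt unfolding hom_def by auto
    define w where "w = pair C P p q g h"
    have w: "w \<in> hom C (Dom C g) P" "Comp C p w = g" "Comp C q w = h" unfolding w_def using prod_pair[OF pr g h] by blast+
    have "w = Comp C (Comp C \<Delta> p) w" unfolding DI using cat_idl[OF cat w(1)] by simp
    also have "\<dots> = Comp C \<Delta> g" using cat_assoc[OF cat w(1) p D(1)] w(2) by simp
    finally have "Comp C q w = Comp C q (Comp C \<Delta> g)" by simp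
    also have "\<dots> = g" using cat_assoc[OF cat g D(1) q] D(3) cat_idl[OF cat g] by simp
    finally show "g = h" using w(3) by simp
  qed
qed


lemma group_part:
  assumes sm: "stiffly_maltsev C" and T: "terminal C T" and X: "X \<in> Ob C" and G: "has_internal_group C X"
  shows "isomorphic C X T"
proof -
  have cat: "is_category C" using sm unfolding stiffly_maltsev_def maltsev_def finitely_complete_def
    by (elim conjE)
  have TO: "T \<in> Ob C" using T unfolding terminal_def by blast
  obtain P p q m one e i where pr: "is_product C X X P p q" and one: "terminal C one"
    and m: "m \<in> hom C P X" and e: "e \<in> hom C one X"
    and ax: "\<forall>T x y z. x \<in> hom C T X \<and> y \<in> hom C T X \<and> z \<in> hom C T X \<longrightarrow>
           Comp C m (pair C P p q (Comp C m (pair C P p q x y)) z) = Comp C m (pair C P p q x (Comp C m (pair C P p q y z))) \<and>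
           Comp C m (pair C P p q x (Comp C e (THE t. t \<in> hom C T one))) = x \<and>
           Comp C m (pair C P p q (Comp C e (THE t. t \<in> hom C T one)) x) = x \<and>
           Comp C m (pair C P p q x (Comp C i x)) = Comp C e (THE t. t \<in> hom C T one) \<and>
           Comp C m (pair C P p q (Comp C i x) x) = Comp C e (THE t. t \<in> hom C T one)"
    using G unfolding has_internal_group_def Let_def by blast
  have p: "p \<in> hom C P X" and q: "q \<in> hom C P X" using pr unfolding is_product_def by blast+
  obtain t where t: "t \<in> hom C X T" using terminal_ex[OF T X] by blast
  obtain v where v: "v \<in> hom C T one" using terminal_ex[OF one TO] by blast
  have ex1X: "\<exists>!u. u \<in> hom C X one" using one X unfolding terminal_def by blast
  have ex1T: "\<exists>!u. u \<in> hom C T one" using one TO unfolding terminal_def by blast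
  define u0 where "u0 = (THE u. u \<in> hom C X one)"
  have u0: "u0 \<in> hom C X one" unfolding u0_def by (rule theI'[OF ex1X])
  have uT: "(THE u. u \<in> hom C T one) = v" using ex1T v by (rule the1_equality)
  define e' where "e' = Comp C e v"
  have e': "e' \<in> hom C T X" unfolding e'_def by (rule cat_comp[OF cat v e])
  define E where "E = Comp C e' t"
  have E: "E \<in> hom C X X" unfolding E_def by (rule cat_comp[OF cat t e'])
  have vt: "Comp C v t = u0" by (rule terminal_uniq[OF cat one cat_comp[OF cat t v] u0])
  have Eu: "E = Comp C e u0" unfolding E_def e'_def using cat_assoc[OF cat t v e] vt by simp
  have te': "Comp C t e' = Idm C T" by (rule terminal_uniq[OF cat T cat_comp[OF cat e' t] cat_id[OF cat TO]])
  have idX: "Idm C X \<in> hom C X X" by (rule cat_id[OF cat X])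
  have ax1: "Comp C m (pair C P p q (Idm C X) E) = Idm C X"
    using ax idX unfolding Eu u0_def by blast
  have ax2: "Comp C m (pair C P p q E (Idm C X)) = Idm C X"
    using ax idX unfolding Eu u0_def by blast
  have ax3: "Comp C m (pair C P p q e' e') = e'"
  proof -
    have "Comp C m (pair C P p q e' (Comp C e (THE t. t \<in> hom C T one))) = e'" using ax e' by blast
    then show ?thesis unfolding uT e'_def[symmetric] .
  qed
  have Ee': "Comp C E e' = e'"
  proof -
    have "Comp C E e' = Comp C e' (Comp C t e')" unfolding E_def using cat_assoc[OF cat e' t e'] by simp
    also have "\<dots> = e'" unfolding te' by (rule cat_idr[OF cat e'])
    finally show ?thesis .
  qed
  have tE: "Comp C t E = t"
  proof -
    have "Comp C t E = Comp C (Comp C t e') t" unfolding E_def using cat_assoc[OF cat t e' t] by simp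
    also have "\<dots> = t" unfolding te' by (rule cat_idl[OF cat t])
    finally show ?thesis .
  qed
  have oA: "(X, t, e') \<in> Ob (Pt C T)" unfolding Pt_Ob using t e' te' by blast
  define d where "d = pair C P p q e' e'"
  have d: "d \<in> hom C T P" "Comp C p d = e'" "Comp C q d = e'" unfolding d_def using prod_pair[OF pr e' e'] by blast+
  have tp: "Comp C t p \<in> hom C P T" by (rule cat_comp[OF cat p t])
  have tpd: "Comp C (Comp C t p) d = Idm C T"
    using cat_assoc[OF cat d(1) p t] d(2) te' by simp
  have oB: "(P, Comp C t p, d) \<in> Ob (Pt C T)" unfolding Pt_Ob using tp d(1) tpd by blast
  have tpeq: "\<And>W k. k \<in> hom C W P \<Longrightarrow> Comp C (Comp C t p) k = Comp C t (Comp C p k)"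
    using cat_assoc[OF cat _ p t] by metis
  have paA: "((P, Comp C t p, d), (X, t, e'), p) \<in> Ar (Pt C T)"
    unfolding Pt_Ar using oA oB p d(2) by blast
  have pbA: "((P, Comp C t p, d), (X, t, e'), q) \<in> Ar (Pt C T)"
  proof -
    have "Comp C t q = Comp C t p" by (rule terminal_uniq[OF cat T cat_comp[OF cat q t] tp])
    then show ?thesis unfolding Pt_Ar using oA oB q d(3) by simp
  qed
  define A where "A = (X, t, e')"
  define B where "B = (P, Comp C t p, d)"
  have prodPt: "is_product (Pt C T) A A B (B, A, p) (B, A, q)"
    unfolding is_product_def
  proof (intro conjI allI impI)
    show "B \<in> Ob (Pt C T)" unfolding B_def by (rule oB)
    show "(B, A, p) \<in> hom (Pt C T) B A" unfolding A_def B_def Pt_hom3 by (rule paA)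
    show "(B, A, q) \<in> hom (Pt C T) B A" unfolding A_def B_def Pt_hom3 by (rule pbA)
    fix Z f g assume fg: "f \<in> hom (Pt C T) Z A \<and> g \<in> hom (Pt C T) Z A"
    obtain \<alpha> where f: "f = (Z, A, \<alpha>)" and fA: "(Z, A, \<alpha>) \<in> Ar (Pt C T)" using fg unfolding Pt_hom by blast
    obtain \<beta> where g: "g = (Z, A, \<beta>)" and gA: "(Z, A, \<beta>) \<in> Ar (Pt C T)" using fg unfolding Pt_hom by blast
    obtain Z0 fz sz where Z: "Z = (Z0, fz, sz)" by (cases Z)
    have oZ: "(Z0, fz, sz) \<in> Ob (Pt C T)" and al: "\<alpha> \<in> hom C Z0 X" "Comp C t \<alpha> = fz" "Comp C \<alpha> sz = e'"
      using fA unfolding Z A_def Pt_Ar by blast+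
    have be: "\<beta> \<in> hom C Z0 X" "Comp C t \<beta> = fz" "Comp C \<beta> sz = e'"
      using gA unfolding Z A_def Pt_Ar by blast+
    have sz: "sz \<in> hom C T Z0" using oZ unfolding Pt_Ob by blast
    define k where "k = pair C P p q \<alpha> \<beta>"
    have k: "k \<in> hom C Z0 P" "Comp C p k = \<alpha>" "Comp C q k = \<beta>" unfolding k_def using prod_pair[OF pr al(1) be(1)] by blast+
    have kA: "(Z, B, k) \<in> Ar (Pt C T)"
    proof -
      have 1: "Comp C (Comp C t p) k = fz" using tpeq[OF k(1)] k(2) al(2) by simp
      have 2: "Comp C k sz = d"
      proof (rule prod_uniq[OF cat pr cat_comp[OF cat sz k(1)] d(1)])
        show "Comp C p (Comp C k sz) = Comp C p d" using cat_assoc[OF cat sz k(1) p] k(2) al(3) d(2) by simp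
        show "Comp C q (Comp C k sz) = Comp C q d" using cat_assoc[OF cat sz k(1) q] k(3) be(3) d(3) by simp
      qed
      show ?thesis unfolding Z B_def Pt_Ar using oZ oB k(1) 1 2 by blast
    qed
    show "\<exists>!h. h \<in> hom (Pt C T) Z B \<and> Comp (Pt C T) (B, A, p) h = f \<and> Comp (Pt C T) (B, A, q) h = g"
    proof (rule ex1I[where a="(Z, B, k)"])
      show "(Z, B, k) \<in> hom (Pt C T) Z B \<and> Comp (Pt C T) (B, A, p) (Z, B, k) = f \<and> Comp (Pt C T) (B, A, q) (Z, B, k) = g"
      proof (intro conjI)
        show "(Z, B, k) \<in> hom (Pt C T) Z B" using kA unfolding Pt_hom by blast
        show "Comp (Pt C T) (B, A, p) (Z, B, k) = f" unfolding Pt_simps(4) k(2) f ..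
        show "Comp (Pt C T) (B, A, q) (Z, B, k) = g" unfolding Pt_simps(4) k(3) g ..
      qed
      fix h assume h: "h \<in> hom (Pt C T) Z B \<and> Comp (Pt C T) (B, A, p) h = f \<and> Comp (Pt C T) (B, A, q) h = g"
      obtain k' where h': "h = (Z, B, k')" and hA: "(Z, B, k') \<in> Ar (Pt C T)" using h unfolding Pt_hom by blast
      have k': "k' \<in> hom C Z0 P" using hA unfolding Z B_def Pt_Ar by blast
      have "(Z, A, Comp C p k') = (Z, A, \<alpha>)" using h unfolding h' f Pt_simps(4) by blast
      then have e1: "Comp C p k' = \<alpha>" by blast
      have "(Z, A, Comp C q k') = (Z, A, \<beta>)" using h unfolding h' g Pt_simps(4) by blast
      then have e2: "Comp C q k' = \<beta>" by blast
      have "pair C P p q \<alpha> \<beta> = k'" by (rule pair_eq[OF cat pr k' e1 e2])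
      then have "k' = k" unfolding k_def by (rule sym)
      then show "h = (Z, B, k)" using h' by simp
    qed
  qed
  have Z0: "zero_obj (Pt C T) (T, Idm C T, Idm C T)" by (rule Pt_zero[OF cat TO])
  have idT: "Idm C T \<in> hom C T T" by (rule cat_id[OF cat TO])
  have oZ: "(T, Idm C T, Idm C T) \<in> Ob (Pt C T)" using Z0 unfolding zero_obj_def terminal_def by blast
  have aA: "(A, (T, Idm C T, Idm C T), t) \<in> Ar (Pt C T)"
    unfolding A_def Pt_Ar using oA oZ t cat_idl[OF cat t] te' by blast
  have bA: "((T, Idm C T, Idm C T), A, e') \<in> Ar (Pt C T)"
    unfolding A_def Pt_Ar using oA oZ e' cat_idr[OF cat e'] te' by blast
  have zE: "zero_mor (Pt C T) A A (A, A, E)"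
    unfolding zero_mor_def
  proof (intro exI conjI)
    show "zero_obj (Pt C T) (T, Idm C T, Idm C T)" by (rule Z0)
    show "(A, (T, Idm C T, Idm C T), t) \<in> hom (Pt C T) A (T, Idm C T, Idm C T)"
      using aA unfolding Pt_hom by blast
    show "((T, Idm C T, Idm C T), A, e') \<in> hom (Pt C T) (T, Idm C T, Idm C T) A"
      using bA unfolding Pt_hom by blast
    show "(A, A, E) = Comp (Pt C T) ((T, Idm C T, Idm C T), A, e') (A, (T, Idm C T, Idm C T), t)"
      unfolding Pt_simps(4) E_def ..
  qed
  have idPA: "Idm (Pt C T) A = (A, A, Idm C X)" unfolding A_def Pt_simps(3) by simp
  define j1 where "j1 = pair C P p q (Idm C X) E"
  define j2 where "j2 = pair C P p q E (Idm C X)"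
  have j1: "j1 \<in> hom C X P" "Comp C p j1 = Idm C X" "Comp C q j1 = E" unfolding j1_def using prod_pair[OF pr idX E] by blast+
  have j2: "j2 \<in> hom C X P" "Comp C p j2 = E" "Comp C q j2 = Idm C X" unfolding j2_def using prod_pair[OF pr E idX] by blast+
  have j1A: "(A, B, j1) \<in> Ar (Pt C T)"
  proof -
    have 1: "Comp C (Comp C t p) j1 = t" using tpeq[OF j1(1)] j1(2) cat_idr[OF cat t] by simp
    have 2: "Comp C j1 e' = d"
    proof (rule prod_uniq[OF cat pr cat_comp[OF cat e' j1(1)] d(1)])
      show "Comp C p (Comp C j1 e') = Comp C p d" using cat_assoc[OF cat e' j1(1) p] j1(2) d(2) cat_idl[OF cat e'] by simp
      show "Comp C q (Comp C j1 e') = Comp C q d" using cat_assoc[OF cat e' j1(1) q] j1(3) d(3) Ee' by simp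
    qed
    show ?thesis unfolding A_def B_def Pt_Ar using oA oB j1(1) 1 2 by blast
  qed
  have j2A: "(A, B, j2) \<in> Ar (Pt C T)"
  proof -
    have 1: "Comp C (Comp C t p) j2 = t" using tpeq[OF j2(1)] j2(2) tE by simp
    have 2: "Comp C j2 e' = d"
    proof (rule prod_uniq[OF cat pr cat_comp[OF cat e' j2(1)] d(1)])
      show "Comp C p (Comp C j2 e') = Comp C p d" using cat_assoc[OF cat e' j2(1) p] j2(2) d(2) Ee' by simp
      show "Comp C q (Comp C j2 e') = Comp C q d" using cat_assoc[OF cat e' j2(1) q] j2(3) d(3) cat_idl[OF cat e'] by simp
    qed
    show ?thesis unfolding A_def B_def Pt_Ar using oA oB j2(1) 1 2 by blast
  qed
  have inj1: "is_inj1 (Pt C T) A A B (B, A, p) (B, A, q) (A, B, j1)"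
    unfolding is_inj1_def
  proof (intro conjI)
    show "(A, B, j1) \<in> hom (Pt C T) A B" using j1A unfolding Pt_hom by blast
    show "Comp (Pt C T) (B, A, p) (A, B, j1) = Idm (Pt C T) A" unfolding Pt_simps(4) j1(2) idPA ..
    show "zero_mor (Pt C T) A A (Comp (Pt C T) (B, A, q) (A, B, j1))" unfolding Pt_simps(4) j1(3) by (rule zE)
  qed
  have inj2: "is_inj2 (Pt C T) A A B (B, A, p) (B, A, q) (A, B, j2)"
    unfolding is_inj2_def
  proof (intro conjI)
    show "(A, B, j2) \<in> hom (Pt C T) A B" using j2A unfolding Pt_hom by blast
    show "Comp (Pt C T) (B, A, q) (A, B, j2) = Idm (Pt C T) A" unfolding Pt_simps(4) j2(3) idPA ..
    show "zero_mor (Pt C T) A A (Comp (Pt C T) (B, A, p) (A, B, j2))" unfolding Pt_simps(4) j2(2) by (rule zE)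
  qed
  have phiA: "(B, A, m) \<in> Ar (Pt C T)"
  proof -
    have 1: "Comp C t m = Comp C t p" by (rule terminal_uniq[OF cat T cat_comp[OF cat m t] tp])
    show ?thesis unfolding A_def B_def Pt_Ar using oA oB m 1 ax3 unfolding d_def by blast
  qed
  have phi: "(B, A, m) \<in> hom (Pt C T) B A" using phiA unfolding Pt_hom by blast
  have c1: "Comp (Pt C T) (B, A, m) (A, B, j1) = Idm (Pt C T) A"
    unfolding Pt_simps(4) idPA j1_def ax1 ..
  have c2: "Comp (Pt C T) (B, A, m) (A, B, j2) = Idm (Pt C T) A"
    unfolding Pt_simps(4) idPA j2_def ax2 ..
  have oA': "A \<in> Ob (Pt C T)" unfolding A_def by (rule oA)
  have zA: "zero_obj (Pt C T) A" by (rule stiff_zero[OF sm TO oA' prodPt inj1 inj2 phi c1 c2])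
  have EA: "((X, t, e'), (X, t, e'), E) \<in> Ar (Pt C T)"
    unfolding Pt_Ar using oA E tE Ee' by blast
  have EI: "E = Idm C X" by (rule zero_endo[OF zA[unfolded A_def] EA cat])
  have "iso C t"
    unfolding iso_def
  proof (intro conjI bexI)
    show "t \<in> Ar C" using t unfolding hom_def by blast
    show "e' \<in> hom C (Cod C t) (Dom C t)" using t e' unfolding hom_def by auto
    show "Comp C e' t = Idm C (Dom C t)" using t EI unfolding E_def hom_def by auto
    show "Comp C t e' = Idm C (Cod C t)" using t te' unfolding hom_def by auto
  qed
  then show ?thesis unfolding isomorphic_def using t by blast
qed

theorem mainTheorem5:
  fixes C :: "('o, 'a) cat"
  assumes "stiffly_maltsev C"
  shows "(\<forall>X \<in> Ob C. has_internal_maltsev C X \<longrightarrow>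
            (\<forall>T t. terminal C T \<and> t \<in> hom C X T \<longrightarrow> mono C t))
       \<and> (\<forall>X \<in> Ob C. has_internal_group C X \<longrightarrow>
            (\<forall>T. terminal C T \<longrightarrow> isomorphic C X T))"
  using maltsev_part[OF assms] group_part[OF assms] by blast

end
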